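(* Let $\mathcal{T}=\mathcal{X}=\mathcal{Y}=\{0,1\}$ and $P\in\Delta_{\mathcal{T},\mathcal{X},\mathcal{Y}}$ with $a=P(T=0)\in(0,1)$, and let $b,c,d,e$, $Q_0$, $g_1,g_2$ and the bounds $g_{i,\min},g_{i,\max}$ be as in the context. If $\tilde Q\in\arg\max_{Q\in\Delta_P}H_Q(T\mid X,Y)$ lies on the relative boundary of $\Delta_P$, then $\tilde Q$ has parameters $(g_1,g_2)=(g_{1,\min},g_{2,\min})$ or $(g_1,g_2)=(g_{1,\max},g_{2,\max})$.
   Context: $\Delta_P=\{Q: Q(X=x,T=t)=P(X=x,T=t),\ Q(Y=y,T=t)=P(Y=y,T=t)\ \forall x,y,t\}$. Parameters: $a=P(T=0)$, $b=P(X=0\mid T=0)$, $c=P(X=0\mid T=1)$, $d=P(Y=0\mid T=0)$, $e=P(Y=0\mid T=1)$. Every $Q\in\Delta_P$ can be written uniquely as $Q(0,x,y)=a\,(P(x\mid 0)P(y\mid 0)+\sigma(x,y)g_1)$ and $Q(1,x,y)=(1-a)(P(x\mid 1)P(y\mid 1)+\sigma(x,y)g_2)$, where $\sigma(x,y)=+1$ if $x=y$ and $-1$ if $x\neq y$; i.e. $Q=Q_0+a g_1\gamma_{0}+(1-a)g_2\gamma_1$ with $Q_0(t,x,y)=P(t)P(x\mid t)P(y\mid t)$ and $\gamma_t=\delta_{t,0,0}+\delta_{t,1,1}-\delta_{t,0,1}-\delta_{t,1,0}$. The admissible parameters form the rectangle $g_{1,\min}\le g_1\le g_{1,\max}$,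 $g_{2,\min}\le g_2\le g_{2,\max}$ with $g_{1,\min}=-\min\{bd,(1-b)(1-d)\}$, $g_{1,\max}=\min\{b(1-d),(1-b)d\}$, $g_{2,\min}=-\min\{ce,(1-c)(1-e)\}$, $g_{2,\max}=\min\{c(1-e),(1-c)e\}$. *)

theory Defs
  imports "HOL-Analysis.Analysis"
begin

text \<open>Joint distributions of (T,X,Y) on {0,1}^3, represented as vectors in
  real ^ (2 \<times> 2 \<times> 2); the entry Q $ (t,x,y) is Q(T=t,X=x,Y=y).\<close>

type_synonym dist3 = "real ^ (2 \<times> 2 \<times> 2)"

definition prob_dist :: "dist3 \<Rightarrow> bool" where
  "prob_dist Q \<longleftrightarrow> (\<forall>i. Q $ i \<ge> 0) \<and> (\<Sum>i\<in>UNIV. Q $ i) = 1"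

definition pTX :: "dist3 \<Rightarrow> 2 \<Rightarrow> 2 \<Rightarrow> real" where
  "pTX Q t x = (\<Sum>y\<in>UNIV. Q $ (t, x, y))"

definition pTY :: "dist3 \<Rightarrow> 2 \<Rightarrow> 2 \<Rightarrow> real" where
  "pTY Q t y = (\<Sum>x\<in>UNIV. Q $ (t, x, y))"

definition pT :: "dist3 \<Rightarrow> 2 \<Rightarrow> real" where
  "pT Q t = (\<Sum>x\<in>UNIV. \<Sum>y\<in>UNIV. Q $ (t, x, y))"

definition pXY :: "dist3 \<Rightarrow> 2 \<Rightarrow> 2 \<Rightarrow> real" where
  "pXY Q x y = (\<Sum>t\<in>UNIV. Q $ (t, x, y))"

definition DeltaP :: "dist3 \<Rightarrow> dist3 set" where
  "DeltaP P = {Q. prob_dist Q \<and> (\<forall>t x. pTX Q t x = pTX P t x) \<and> (\<forall>t y. pTY Q t y = pTY P t y)}"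

definition condEntT :: "dist3 \<Rightarrow> real" where
  "condEntT Q = - (\<Sum>i\<in>UNIV. case i of (t, x, y) \<Rightarrow>
      (if Q $ (t, x, y) = 0 then 0 else Q $ (t, x, y) * log 2 (Q $ (t, x, y) / pXY Q x y)))"

definition condX :: "dist3 \<Rightarrow> 2 \<Rightarrow> 2 \<Rightarrow> real" where
  "condX P t x = pTX P t x / pT P t"

definition condY :: "dist3 \<Rightarrow> 2 \<Rightarrow> 2 \<Rightarrow> real" where
  "condY P t y = pTY P t y / pT P t"

definition sgn2 :: "2 \<Rightarrow> 2 \<Rightarrow> real" where
  "sgn2 x y = (if x = y then 1 else -1)"

definition Qparam :: "dist3 \<Rightarrow> real \<Rightarrow> real \<Rightarrow> dist3" where
  "Qparam P g1 g2 = (\<chi> i. case i of (t, x, y) \<Rightarrow>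
      (if t = 0 then pT P 0 * (condX P 0 x * condY P 0 y + sgn2 x y * g1)
       else pT P 1 * (condX P 1 x * condY P 1 y + sgn2 x y * g2)))"

definition pa :: "dist3 \<Rightarrow> real" where "pa P = pT P 0"
definition pb :: "dist3 \<Rightarrow> real" where "pb P = condX P 0 0"
definition pc :: "dist3 \<Rightarrow> real" where "pc P = condX P 1 0"
definition pd :: "dist3 \<Rightarrow> real" where "pd P = condY P 0 0"
definition pe :: "dist3 \<Rightarrow> real" where "pe P = condY P 1 0"

definition g1min :: "dist3 \<Rightarrow> real" where
  "g1min P = - min (pb P * pd P) ((1 - pb P) * (1 - pd P))"
definition g1max :: "dist3 \<Rightarrow> real" where
  "g1max P = min (pb P * (1 - pd P)) ((1 - pb P) * pd P)"
definition g2min :: "dist3 \<Rightarrow> real" where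
  "g2min P = - min (pc P * pe P) ((1 - pc P) * (1 - pe P))"
definition g2max :: "dist3 \<Rightarrow> real" where
  "g2max P = min (pc P * (1 - pe P)) ((1 - pc P) * pe P)"

end

theory Submission
  imports Defs
begin
lemma two_cases: "(x::2) = 0 \<or> x = 1"
  by (metis exhaust_2 zero_neq_one)
lemma UNIV2: "(UNIV::2 set) = {0,1}" using two_cases by auto
lemma sum2: "(\<Sum>x\<in>(UNIV::2 set). f x) = f 0 + f 1"
  unfolding UNIV2 by (subst sum.insert) auto
lemma sum_pair: "(\<Sum>i\<in>(UNIV::('a::finite\<times>'b::finite) set). f i) = (\<Sum>x\<in>UNIV. \<Sum>y\<in>UNIV. f (x,y))"
  by (simp add: sum.cartesian_product UNIV_Times_UNIV[symmetric] del: UNIV_Times_UNIV)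
lemma sum8: "(\<Sum>i\<in>(UNIV::(2\<times>2\<times>2) set). f i) = f (0,0,0) + f (0,0,1) + f (0,1,0) + f (0,1,1) + f (1,0,0) + f (1,0,1) + f (1,1,0) + f (1,1,1)"
  by (simp add: sum_pair sum2 ac_simps)
lemma all8: "(\<forall>i::2\<times>2\<times>2. R i) \<longleftrightarrow> R (0,0,0) \<and> R (0,0,1) \<and> R (0,1,0) \<and> R (0,1,1) \<and> R (1,0,0) \<and> R (1,0,1) \<and> R (1,1,0) \<and> R (1,1,1)"
  apply (rule iffI) apply simp apply clarify subgoal for t x y using two_cases[of t] two_cases[of x] two_cases[of y] by auto done
lemma vec8_eq: "(Q::dist3) = R \<longleftrightarrow> Q$(0,0,0) = R$(0,0,0) \<and> Q$(0,0,1) = R$(0,0,1) \<and> Q$(0,1,0) = R$(0,1,0) \<and> Q$(0,1,1) = R$(0,1,1) \<and> Q$(1,0,0) = R$(1,0,0) \<and> Q$(1,0,1) = R$(1,0,1) \<and> Q$(1,1,0) = R$(1,1,0) \<and> Q$(1,1,1) = R$(1,1,1)"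
  unfolding vec_eq_iff all8 by simp
lemma sgn2_simps[simp]: "sgn2 0 0 = 1" "sgn2 1 1 = 1" "sgn2 0 1 = -1" "sgn2 1 0 = -1"
  by (auto simp: sgn2_def)

lemma margs: "pTX Q t x = Q$(t,x,0) + Q$(t,x,1)" "pTY Q t y = Q$(t,0,y) + Q$(t,1,y)"
  "pT Q t = Q$(t,0,0) + Q$(t,0,1) + Q$(t,1,0) + Q$(t,1,1)" "pXY Q x y = Q$(0,x,y) + Q$(1,x,y)"
  by (simp_all add: pTX_def pTY_def pT_def pXY_def sum2)

lemma prob_dist8: "prob_dist Q \<longleftrightarrow> (\<forall>i. Q$i \<ge> 0) \<and> Q$(0,0,0) + Q$(0,0,1) + Q$(0,1,0) + Q$(0,1,1) + Q$(1,0,0) + Q$(1,0,1) + Q$(1,1,0) + Q$(1,1,1) = 1"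
  unfolding prob_dist_def sum8 by simp

locale PP =
  fixes P :: dist3
  assumes pd: "prob_dist P" and a0: "0 < pa P" and a1: "pa P < 1"
begin
lemma nn: "P$i \<ge> 0" using pd unfolding prob_dist_def by blast
lemma tot: "P$(0,0,0) + P$(0,0,1) + P$(0,1,0) + P$(0,1,1) + P$(1,0,0) + P$(1,0,1) + P$(1,1,0) + P$(1,1,1) = 1"
  using pd by (simp add: prob_dist8)
lemma pT0: "pT P 0 = pa P" by (simp add: pa_def)
lemma pT1: "pT P 1 = 1 - pa P" using tot by (simp add: margs pa_def)
lemma X0: "pTX P t 0 + pTX P t 1 = pT P t" by (simp add: margs)
lemma Y0: "pTY P t 0 + pTY P t 1 = pT P t" by (simp add: margs)
lemma Xnn: "pTX P t x \<ge> 0" "pTY P t x \<ge> 0" using nn by (simp_all add: margs add_nonneg_nonneg)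
lemma pos1: "0 < 1 - pa P" using a1 by simp
lemma cX01: "condX P 0 1 = 1 - pb P" using X0[of 0] a0 unfolding condX_def pb_def pT0
  by (simp add: field_simps)
lemma cY01: "condY P 0 1 = 1 - pd P" using Y0[of 0] a0 unfolding condY_def pd_def pT0
  by (simp add: field_simps)
lemma cX11: "condX P 1 1 = 1 - pc P" using X0[of 1] pos1 unfolding condX_def pc_def pT1
  by (simp add: field_simps)
lemma cY11: "condY P 1 1 = 1 - pe P" using Y0[of 1] pos1 unfolding condY_def pe_def pT1
  by (simp add: field_simps)
lemma rng: "0 \<le> pb P" "pb P \<le> 1" "0 \<le> pc P" "pc P \<le> 1" "0 \<le> pd P" "pd P \<le> 1" "0 \<le> pe P" "pe P \<le> 1"
  using X0[of 0] X0[of 1] Y0[of 0] Y0[of 1] Xnn[of 0 0] Xnn[of 0 1] Xnn[of 1 0] Xnn[of 1 1] a0 pos1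
  unfolding pb_def pc_def pd_def pe_def condX_def condY_def pT0 pT1
  by (auto simp: divide_nonneg_pos)
lemma Qp: "Qparam P g1 g2 $ (0,0,0) = pa P * (pb P * pd P + g1)"
  "Qparam P g1 g2 $ (0,0,1) = pa P * (pb P * (1 - pd P) - g1)"
  "Qparam P g1 g2 $ (0,1,0) = pa P * ((1 - pb P) * pd P - g1)"
  "Qparam P g1 g2 $ (0,1,1) = pa P * ((1 - pb P) * (1 - pd P) + g1)"
  "Qparam P g1 g2 $ (1,0,0) = (1 - pa P) * (pc P * pe P + g2)"
  "Qparam P g1 g2 $ (1,0,1) = (1 - pa P) * (pc P * (1 - pe P) - g2)"
  "Qparam P g1 g2 $ (1,1,0) = (1 - pa P) * ((1 - pc P) * pe P - g2)"
  "Qparam P g1 g2 $ (1,1,1) = (1 - pa P) * ((1 - pc P) * (1 - pe P) + g2)"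
  by (simp_all add: Qparam_def pT0 pT1 cX01 cY01 cX11 cY11 pb_def[symmetric] pc_def[symmetric] pd_def[symmetric] pe_def[symmetric])
lemma PX: "pTX P 0 0 = pa P * pb P" "pTX P 0 1 = pa P * (1 - pb P)"
  "pTX P 1 0 = (1 - pa P) * pc P" "pTX P 1 1 = (1 - pa P) * (1 - pc P)"
  "pTY P 0 0 = pa P * pd P" "pTY P 0 1 = pa P * (1 - pd P)"
  "pTY P 1 0 = (1 - pa P) * pe P" "pTY P 1 1 = (1 - pa P) * (1 - pe P)"
  using a0 pos1 X0[of 0] X0[of 1] Y0[of 0] Y0[of 1]
  by (simp_all add: pb_def pc_def pd_def pe_def condX_def condY_def pT0 pT1 right_diff_distrib)
end

lemma slice_fwd:
  fixes A b d q00 q01 q10 q11 :: real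
  assumes "A > 0" "q00+q01 = A*b" "q10+q11 = A*(1-b)" "q00+q10 = A*d" "q01+q11 = A*(1-d)"
    "q00 \<ge> 0" "q01 \<ge> 0" "q10 \<ge> 0" "q11 \<ge> 0"
  defines "g \<equiv> q00/A - b*d"
  shows "q00 = A*(b*d+g)" "q01 = A*(b*(1-d)-g)" "q10 = A*((1-b)*d-g)" "q11 = A*((1-b)*(1-d)+g)"
    "- min (b*d) ((1-b)*(1-d)) \<le> g" "g \<le> min (b*(1-d)) ((1-b)*d)"
proof -
  show h0: "q00 = A*(b*d+g)" using assms(1) by (simp add: g_def field_simps)
  show h1: "q01 = A*(b*(1-d)-g)" using h0 assms(2) by (simp add: algebra_simps)
  show h2: "q10 = A*((1-b)*d-g)" using h0 assms(4) by (simp add: algebra_simps)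
  show h3: "q11 = A*((1-b)*(1-d)+g)" using h2 assms(3) by (simp add: algebra_simps)
  have "b*d+g \<ge> 0" using h0 assms(1,6) by (simp add: zero_le_mult_iff)
  moreover have "(1-b)*(1-d)+g \<ge> 0" using h3 assms(1,9) by (simp add: zero_le_mult_iff)
  ultimately show "- min (b*d) ((1-b)*(1-d)) \<le> g" by linarith
  have "b*(1-d)-g \<ge> 0" using h1 assms(1,7) by (simp add: zero_le_mult_iff)
  moreover have "(1-b)*d-g \<ge> 0" using h2 assms(1,8) by (simp add: zero_le_mult_iff)
  ultimately show "g \<le> min (b*(1-d)) ((1-b)*d)" by linarith
qed

lemma slice_bwd:
  fixes A b d g :: real
  assumes "A \<ge> 0" "- min (b*d) ((1-b)*(1-d)) \<le> g" "g \<le> min (b*(1-d)) ((1-b)*d)"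
  shows "A*(b*d+g) \<ge> 0" "A*(b*(1-d)-g) \<ge> 0" "A*((1-b)*d-g) \<ge> 0" "A*((1-b)*(1-d)+g) \<ge> 0"
  using assms by (auto intro!: mult_nonneg_nonneg)

context PP begin
lemma Qparam_in:
  assumes "g1min P \<le> g1" "g1 \<le> g1max P" "g2min P \<le> g2" "g2 \<le> g2max P"
  shows "Qparam P g1 g2 \<in> DeltaP P"
proof -
  note s1 = slice_bwd[of "pa P" "pb P" "pd P" g1] and s2 = slice_bwd[of "1 - pa P" "pc P" "pe P" g2]
  have nn: "\<forall>i. Qparam P g1 g2 $ i \<ge> 0"
    unfolding all8 Qp using s1 s2 assms a0 pos1 unfolding g1min_def g1max_def g2min_def g2max_def by auto
  have "prob_dist (Qparam P g1 g2)" unfolding prob_dist8 Qp using nn by (simp add: algebra_simps)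
  moreover have "\<forall>t x. pTX (Qparam P g1 g2) t x = pTX P t x"
    by (intro allI, rule_tac x=t in two_cases[elim_format], rule_tac x=x in two_cases[elim_format])
      (auto simp: margs[of "Qparam P g1 g2"] Qp PX algebra_simps)
  moreover have "\<forall>t y. pTY (Qparam P g1 g2) t y = pTY P t y"
    by (intro allI, rule_tac x=t in two_cases[elim_format], rule_tac x=y in two_cases[elim_format])
      (auto simp: margs[of "Qparam P g1 g2"] Qp PX algebra_simps)
  ultimately show ?thesis unfolding DeltaP_def by blast
qed

lemma Delta_param:
  assumes "Q \<in> DeltaP P"
  defines "h1 \<equiv> Q$(0,0,0)/pa P - pb P * pd P" and "h2 \<equiv> Q$(1,0,0)/(1 - pa P) - pc P * pe P"
  shows "Q = Qparam P h1 h2" "g1min P \<le> h1" "h1 \<le> g1max P" "g2min P \<le> h2" "h2 \<le> g2max P"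
proof -
  have Qd: "prob_dist Q" and mX: "\<And>t x. pTX Q t x = pTX P t x" and mY: "\<And>t y. pTY Q t y = pTY P t y"
    using assms(1) unfolding DeltaP_def by auto
  have nQ: "\<And>i. Q$i \<ge> 0" using Qd unfolding prob_dist_def by blast
  note f1 = slice_fwd[of "pa P" "Q$(0,0,0)" "Q$(0,0,1)" "pb P" "Q$(0,1,0)" "Q$(0,1,1)" "pd P",
      OF a0 mX[of 0 0, unfolded PX, unfolded margs] mX[of 0 1, unfolded PX, unfolded margs] mY[of 0 0, unfolded PX, unfolded margs]
      mY[of 0 1, unfolded PX, unfolded margs] nQ nQ nQ nQ, folded h1_def]
  note f2 = slice_fwd[of "1 - pa P" "Q$(1,0,0)" "Q$(1,0,1)" "pc P" "Q$(1,1,0)" "Q$(1,1,1)" "pe P",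
      OF pos1 mX[of 1 0, unfolded PX, unfolded margs] mX[of 1 1, unfolded PX, unfolded margs] mY[of 1 0, unfolded PX, unfolded margs]
      mY[of 1 1, unfolded PX, unfolded margs] nQ nQ nQ nQ, folded h2_def]
  show "Q = Qparam P h1 h2" unfolding vec8_eq Qp using f1 f2 by auto
  show "g1min P \<le> h1" "h1 \<le> g1max P" "g2min P \<le> h2" "h2 \<le> g2max P"
    using f1 f2 unfolding g1min_def g1max_def g2min_def g2max_def by auto
qed
end

definition eta :: "real \<Rightarrow> real" where "eta t = t * ln t"

lemma eta_low: assumes "x > 0" "y > 0" shows "eta y - eta x \<ge> (y-x)*(1 + ln x)"
proof -
  have "ln (x/y) \<le> x/y - 1" using assms by (intro ln_le_minus_one) simp
  hence "ln x - ln y \<le> (x-y)/y" using assms by (simp add: ln_div diff_divide_distrib)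
  hence "y*(ln x - ln y) \<le> x - y" using assms by (simp add: field_simps)
  thus ?thesis unfolding eta_def by (simp add: algebra_simps)
qed

lemma eta_up: assumes "x > 0" "y > 0" shows "eta y - eta x \<le> (y-x)*(y/x + ln x)"
proof -
  have "ln (y/x) \<le> y/x - 1" using assms by (intro ln_le_minus_one) simp
  hence "ln y - ln x \<le> (y-x)/x" using assms by (simp add: ln_div diff_divide_distrib)
  hence "y*(ln y - ln x) \<le> y*((y-x)/x)" using assms by (intro mult_left_mono) auto
  hence "y * ln y \<le> y * ln x + (y-x)*(y/x)" using assms by (simp add: field_simps)
  thus ?thesis unfolding eta_def by (simp add: algebra_simps)
qed

definition Kf :: "real \<Rightarrow> real \<Rightarrow> real" where
  "Kf \<alpha> \<beta> = (if \<alpha> > 0 then \<bar>\<beta>\<bar> * (2 + \<bar>ln \<alpha>\<bar>) else 0)"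
definition dl :: "real \<Rightarrow> real \<Rightarrow> real" where
  "dl \<alpha> \<beta> = (if \<alpha> > 0 then \<alpha> else 1) / (2*\<bar>\<beta>\<bar> + 1)"

lemma dl_pos: "dl \<alpha> \<beta> > 0" unfolding dl_def by (auto intro!: divide_pos_pos)
lemma Kf_nn: "Kf \<alpha> \<beta> \<ge> 0" unfolding Kf_def by auto

lemma small: assumes "\<alpha> > 0" "0 < \<epsilon>" "\<epsilon> < dl \<alpha> \<beta>"
  shows "\<epsilon> * \<bar>\<beta>\<bar> \<le> \<alpha>/2"
proof -
  have "\<epsilon> * (2*\<bar>\<beta>\<bar> + 1) < \<alpha>" using assms unfolding dl_def by (simp add: field_simps)
  thus ?thesis using assms by (simp add: algebra_simps)
qed

lemma cell_low: assumes "\<alpha> > 0" "0 < \<epsilon>" "\<epsilon> < dl \<alpha> \<beta>"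
  shows "eta (\<alpha> + \<epsilon>*\<beta>) - eta \<alpha> \<ge> - (\<epsilon> * Kf \<alpha> \<beta>)"
proof -
  have s: "\<epsilon> * \<bar>\<beta>\<bar> \<le> \<alpha>/2" by (rule small[OF assms])
  have ab: "\<bar>\<epsilon>*\<beta>\<bar> = \<epsilon> * \<bar>\<beta>\<bar>" using assms(2) by (simp add: abs_mult)
  have y: "\<alpha> + \<epsilon>*\<beta> > 0" using s ab assms(1) abs_ge_minus_self[of "\<epsilon>*\<beta>"] by linarith
  have "eta (\<alpha> + \<epsilon>*\<beta>) - eta \<alpha> \<ge> (\<epsilon>*\<beta>)*(1 + ln \<alpha>)" using eta_low[OF assms(1) y] by simp
  moreover have "(\<epsilon>*\<beta>)*(1 + ln \<alpha>) \<ge> - (\<bar>\<epsilon>*\<beta>\<bar> * (2 + \<bar>ln \<alpha>\<bar>))"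
  proof -
    have "\<bar>(\<epsilon>*\<beta>)*(1 + ln \<alpha>)\<bar> \<le> \<bar>\<epsilon>*\<beta>\<bar> * (2 + \<bar>ln \<alpha>\<bar>)"
      unfolding abs_mult by (intro mult_left_mono) auto
    thus ?thesis by linarith
  qed
  ultimately show ?thesis using ab assms(1) unfolding Kf_def by simp
qed

lemma cell_up: assumes "\<alpha> \<ge> 0" "\<alpha> = 0 \<Longrightarrow> \<beta> \<ge> 0" "0 < \<epsilon>" "\<epsilon> < dl \<alpha> \<beta>"
  shows "eta (\<alpha> + \<epsilon>*\<beta>) - eta \<alpha> \<le> \<epsilon> * Kf \<alpha> \<beta>"
proof (cases "\<alpha> > 0")
  case True
  have s: "\<epsilon> * \<bar>\<beta>\<bar> \<le> \<alpha>/2" by (rule small[OF True assms(3,4)])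
  have ab: "\<bar>\<epsilon>*\<beta>\<bar> = \<epsilon> * \<bar>\<beta>\<bar>" using assms(3) by (simp add: abs_mult)
  have y: "\<alpha> + \<epsilon>*\<beta> > 0" using s ab True abs_ge_minus_self[of "\<epsilon>*\<beta>"] by linarith
  have q: "(\<alpha> + \<epsilon>*\<beta>)/\<alpha> \<le> 2" using s ab True by (simp add: field_simps)
  have q0: "(\<alpha> + \<epsilon>*\<beta>)/\<alpha> \<ge> 0" using y True by simp
  have "eta (\<alpha> + \<epsilon>*\<beta>) - eta \<alpha> \<le> (\<epsilon>*\<beta>)*((\<alpha> + \<epsilon>*\<beta>)/\<alpha> + ln \<alpha>)" using eta_up[OF True y] by simp
  moreover have "(\<epsilon>*\<beta>)*((\<alpha> + \<epsilon>*\<beta>)/\<alpha> + ln \<alpha>) \<le> \<bar>\<epsilon>*\<beta>\<bar> * (2 + \<bar>ln \<alpha>\<bar>)"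
  proof -
    have "\<bar>(\<epsilon>*\<beta>)*((\<alpha> + \<epsilon>*\<beta>)/\<alpha> + ln \<alpha>)\<bar> \<le> \<bar>\<epsilon>*\<beta>\<bar> * (2 + \<bar>ln \<alpha>\<bar>)"
      unfolding abs_mult using q q0 by (intro mult_left_mono) auto
    thus ?thesis by linarith
  qed
  ultimately show ?thesis using ab True unfolding Kf_def by simp
next
  case False
  hence a: "\<alpha> = 0" using assms(1) by simp
  hence b: "\<beta> \<ge> 0" using assms(2) by simp
  have "\<epsilon> * (2*\<bar>\<beta>\<bar> + 1) < 1" using assms(4) a unfolding dl_def by (simp add: field_simps)
  hence "\<epsilon> * \<beta> \<le> 1" using b assms(3) by (simp add: algebra_simps)
  moreover have "\<epsilon> * \<beta> \<ge> 0" using b assms(3) by simp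
  moreover note h = calculation
  have "eta (\<epsilon>*\<beta>) \<le> 0"
  proof (cases "\<epsilon>*\<beta> = 0")
    case False
    hence p: "\<epsilon>*\<beta> > 0" using h by linarith
    hence "ln (\<epsilon>*\<beta>) \<le> 0" using ln_le_zero_iff[OF p] h(1) by blast
    thus ?thesis using h unfolding eta_def by (intro mult_nonneg_nonpos) auto
  qed (auto simp add: eta_def)
  thus ?thesis using a unfolding Kf_def eta_def by simp
qed

lemma cell_gain: assumes "\<beta> > 0" "0 < \<epsilon>" "\<epsilon> * \<beta> \<le> exp (- M / \<beta>)"
  shows "- eta (\<epsilon> * \<beta>) \<ge> \<epsilon> * M"
proof -
  have p: "\<epsilon>*\<beta> > 0" using assms by simp
  have "ln (\<epsilon>*\<beta>) \<le> - M / \<beta>" using assms(3) p by (metis exp_le_cancel_iff exp_ln)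
  hence "\<beta> * ln (\<epsilon>*\<beta>) \<le> - M" using assms(1) by (simp add: field_simps)
  hence "\<epsilon> * (\<beta> * ln (\<epsilon>*\<beta>)) \<le> \<epsilon> * (- M)" using assms(2) by (intro mult_left_mono) auto
  thus ?thesis unfolding eta_def by (simp add: algebra_simps)
qed

lemma ent_cell:
  fixes u v :: real
  assumes "u \<ge> 0" "v \<ge> 0"
  shows "((if u = 0 then 0 else u * log 2 (u/(u+v))) + (if v = 0 then 0 else v * log 2 (v/(u+v)))) * ln 2
     = eta u + eta v - eta (u+v)"
proof -
  have l: "w * log 2 (w/(u+v)) * ln 2 = eta w - w * ln (u+v)" if "w > 0" "u+v > 0" for w
  proof -
    have "ln (2::real) > 0" by simp
    thus ?thesis using that by (simp add: log_def ln_div eta_def field_simps)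
  qed
  show ?thesis
  proof (cases "u = 0")
    case True thus ?thesis using assms by (cases "v = 0") (auto simp: l eta_def)
  next
    case False
    hence u: "u > 0" using assms by simp
    show ?thesis
    proof (cases "v = 0")
      case True thus ?thesis using u by (simp add: l eta_def)
    next
      case False
      hence v: "v > 0" using assms by simp
      have "((u * log 2 (u/(u+v))) + (v * log 2 (v/(u+v)))) * ln 2 = eta u + eta v - (u+v) * ln (u+v)"
        using u v l[of u] l[of v] by (simp add: distrib_right)
      thus ?thesis using u v by (simp add: eta_def)
    qed
  qed
qed

lemma condEnt_eq:
  assumes "\<forall>i. Q$i \<ge> 0"
  shows "condEntT Q * ln 2 = (\<Sum>j\<in>UNIV. eta (pXY Q (fst j) (snd j))) - (\<Sum>i\<in>UNIV. eta (Q$i))"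
proof -
  have n: "\<And>t x y. Q$(t,x,y) \<ge> 0" using assms by blast
  note c = ent_cell[OF n n]
  show ?thesis
    unfolding condEntT_def sum8 sum_pair[where 'a=2 and 'b=2] sum2 margs fst_conv snd_conv
    using c[of 0 0 0 1 0 0] c[of 0 0 1 1 0 1] c[of 0 1 0 1 1 0] c[of 0 1 1 1 1 1]
    by (simp add: algebra_simps)
qed

lemma improve:
  fixes q m :: dist3 and i0 :: "2\<times>2\<times>2"
  assumes qn: "\<forall>i. q$i \<ge> 0" and mn: "\<forall>i. m$i \<ge> 0" and pp: "\<forall>x y. pXY q x y > 0"
    and z: "q$i0 = 0" and mp: "m$i0 > 0"
  shows "\<exists>\<epsilon>>0. \<epsilon> < 1 \<and> condEntT q < condEntT ((1-\<epsilon>) *\<^sub>R q + \<epsilon> *\<^sub>R m)"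
proof -
  define B where "B i = m$i - q$i" for i
  define C where "C j = pXY m (fst j) (snd j) - pXY q (fst j) (snd j)" for j :: "2\<times>2"
  define pq where "pq j = pXY q (fst j) (snd j)" for j :: "2\<times>2"
  define K where "K = (\<Sum>i\<in>UNIV. Kf (q$i) (B i)) + (\<Sum>j\<in>UNIV. Kf (pq j) (C j))"
  define \<delta> where "\<delta> = min (Min (range (\<lambda>i. dl (q$i) (B i)))) (Min (range (\<lambda>j. dl (pq j) (C j))))"
  define \<beta>0 where "\<beta>0 = m$i0"
  define \<epsilon> where "\<epsilon> = min (\<delta>/2) (min (1/2) (exp (-(K+1)/\<beta>0)/\<beta>0))"
  have b0: "\<beta>0 > 0" using mp by (simp add: \<beta>0_def)
  have \<delta>pos: "\<delta> > 0" unfolding \<delta>_def by (simp add: dl_pos)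
  have ep: "\<epsilon> > 0" using \<delta>pos b0 by (simp add: \<epsilon>_def)
  have e1: "\<epsilon> < 1" by (simp add: \<epsilon>_def)
  have e\<delta>: "\<epsilon> < \<delta>" using \<delta>pos by (simp add: \<epsilon>_def)
  have eb: "\<epsilon> * \<beta>0 \<le> exp (-(K+1)/\<beta>0)"
  proof -
    have "\<epsilon> \<le> exp (-(K+1)/\<beta>0)/\<beta>0" by (simp add: \<epsilon>_def)
    thus ?thesis using b0 by (simp add: field_simps)
  qed
  have edl1: "\<epsilon> < dl (q$i) (B i)" for i
  proof -
    have "\<delta> \<le> dl (q$i) (B i)" unfolding \<delta>_def by (rule min.coboundedI1) (rule Min_le, auto)
    thus ?thesis using e\<delta> by simp
  qed
  have edl2: "\<epsilon> < dl (pq j) (C j)" for j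
  proof -
    have "\<delta> \<le> dl (pq j) (C j)" unfolding \<delta>_def by (rule min.coboundedI2) (rule Min_le, auto)
    thus ?thesis using e\<delta> by simp
  qed
  define Qe where "Qe = (1-\<epsilon>) *\<^sub>R q + \<epsilon> *\<^sub>R m"
  have Qi: "Qe$i = q$i + \<epsilon> * B i" for i by (simp add: Qe_def B_def algebra_simps)
  have Qp: "pXY Qe (fst j) (snd j) = pq j + \<epsilon> * C j" for j
    by (simp add: margs Qi B_def C_def pq_def algebra_simps)
  have Qn: "\<forall>i. Qe$i \<ge> 0" using qn mn ep e1 by (simp add: Qe_def add_nonneg_nonneg)
  have up: "eta (Qe$i) - eta (q$i) \<le> \<epsilon> * Kf (q$i) (B i) + (if i = i0 then eta (\<epsilon>*\<beta>0) else 0)" for i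
  proof (cases "i = i0")
    case True thus ?thesis using z by (simp add: Qi B_def \<beta>0_def Kf_def eta_def)
  next
    case False
    have "q$i = 0 \<Longrightarrow> B i \<ge> 0" using mn[rule_format, of i] by (simp add: B_def)
    hence "eta (q$i + \<epsilon> * B i) - eta (q$i) \<le> \<epsilon> * Kf (q$i) (B i)"
      using qn[rule_format, of i] ep edl1[of i] by (intro cell_up) auto
    thus ?thesis using False by (simp add: Qi)
  qed
  have low: "eta (pXY Qe (fst j) (snd j)) - eta (pq j) \<ge> - (\<epsilon> * Kf (pq j) (C j))" for j
    unfolding Qp using pp ep edl2 by (intro cell_low) (auto simp: pq_def)
  have s1: "(\<Sum>i\<in>UNIV. eta (Qe$i)) - (\<Sum>i\<in>UNIV. eta (q$i)) \<le> \<epsilon> * (\<Sum>i\<in>UNIV. Kf (q$i) (B i)) + eta (\<epsilon>*\<beta>0)"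
  proof -
    have "(\<Sum>i\<in>UNIV. eta (Qe$i)) - (\<Sum>i\<in>UNIV. eta (q$i)) = (\<Sum>i\<in>UNIV. eta (Qe$i) - eta (q$i))"
      by (simp add: sum_subtractf)
    also have "\<dots> \<le> (\<Sum>i\<in>UNIV. \<epsilon> * Kf (q$i) (B i) + (if i = i0 then eta (\<epsilon>*\<beta>0) else 0))"
      by (rule sum_mono) (rule up)
    also have "\<dots> = \<epsilon> * (\<Sum>i\<in>UNIV. Kf (q$i) (B i)) + eta (\<epsilon>*\<beta>0)"
      by (simp add: sum.distrib sum_distrib_left)
    finally show ?thesis .
  qed
  have s2: "(\<Sum>j\<in>UNIV. eta (pXY Qe (fst j) (snd j))) - (\<Sum>j\<in>UNIV. eta (pq j)) \<ge> - (\<epsilon> * (\<Sum>j\<in>UNIV. Kf (pq j) (C j)))"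
  proof -
    have "(\<Sum>j\<in>UNIV. eta (pXY Qe (fst j) (snd j))) - (\<Sum>j\<in>UNIV. eta (pq j)) = (\<Sum>j\<in>UNIV. eta (pXY Qe (fst j) (snd j)) - eta (pq j))"
      by (simp add: sum_subtractf)
    also have "\<dots> \<ge> (\<Sum>j\<in>UNIV. - (\<epsilon> * Kf (pq j) (C j)))"
      by (rule sum_mono) (rule low)
    finally show ?thesis by (simp add: sum_negf sum_distrib_left)
  qed
  have g: "- eta (\<epsilon> * \<beta>0) \<ge> \<epsilon> * (K+1)" by (rule cell_gain[OF b0 ep eb])
  have "condEntT Qe * ln 2 - condEntT q * ln 2 \<ge> \<epsilon>"
    unfolding condEnt_eq[OF Qn] condEnt_eq[OF qn] pq_def[symmetric]
    using s1 s2 g unfolding K_def by (simp add: algebra_simps)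
  hence "condEntT q * ln 2 < condEntT Qe * ln 2" using ep by linarith
  moreover have "ln (2::real) > 0" by simp
  ultimately have "condEntT Qe - condEntT q > 0" by simp
  thus ?thesis using ep e1 unfolding Qe_def by auto
qed

lemma Delta_convex:
  assumes "q \<in> DeltaP P" "m \<in> DeltaP P" "0 \<le> \<epsilon>" "\<epsilon> \<le> 1"
  shows "(1-\<epsilon>) *\<^sub>R q + \<epsilon> *\<^sub>R m \<in> DeltaP P"
proof -
  have q: "prob_dist q" "\<And>t x. pTX q t x = pTX P t x" "\<And>t y. pTY q t y = pTY P t y"
    and m: "prob_dist m" "\<And>t x. pTX m t x = pTX P t x" "\<And>t y. pTY m t y = pTY P t y"
    using assms(1,2) unfolding DeltaP_def by auto
  let ?Q = "(1-\<epsilon>) *\<^sub>R q + \<epsilon> *\<^sub>R m"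
  have "\<forall>i. ?Q$i \<ge> 0" using q(1) m(1) assms(3,4) unfolding prob_dist_def by (simp add: add_nonneg_nonneg)
  moreover have "(\<Sum>i\<in>UNIV. ?Q$i) = 1"
  proof -
    have "(\<Sum>i\<in>UNIV. ?Q$i) = (1-\<epsilon>)*(\<Sum>i\<in>UNIV. q$i) + \<epsilon>*(\<Sum>i\<in>UNIV. m$i)"
      by (simp add: sum.distrib sum_distrib_left)
    thus ?thesis using q(1) m(1) unfolding prob_dist_def by simp
  qed
  moreover have "pTX ?Q t x = pTX P t x" for t x
  proof -
    have "pTX ?Q t x = (1-\<epsilon>) * pTX q t x + \<epsilon> * pTX m t x" by (simp add: margs algebra_simps)
    thus ?thesis using q(2) m(2) by (simp add: algebra_simps)
  qed
  moreover have "pTY ?Q t y = pTY P t y" for t y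
  proof -
    have "pTY ?Q t y = (1-\<epsilon>) * pTY q t y + \<epsilon> * pTY m t y" by (simp add: margs algebra_simps)
    thus ?thesis using q(3) m(3) by (simp add: algebra_simps)
  qed
  ultimately show ?thesis unfolding DeltaP_def prob_dist_def by blast
qed

context PP begin
lemma Qparam_affine:
  fixes u w :: real
  assumes "u + w = 1"
  shows "u *\<^sub>R Qparam P h1 h2 + w *\<^sub>R Qparam P k1 k2 = Qparam P (u*h1 + w*k1) (u*h2 + w*k2)"
proof -
  have v: "w = 1 - u" using assms by simp
  show ?thesis unfolding vec8_eq by (simp add: Qp v algebra_simps)
qed

lemma relint:
  assumes g: "g1min P \<le> g1" "g1 \<le> g1max P" "g2min P \<le> g2" "g2 \<le> g2max P"
    and I1: "g1min P = g1max P \<or> (g1min P < g1 \<and> g1 < g1max P)"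
    and I2: "g2min P = g2max P \<or> (g2min P < g2 \<and> g2 < g2max P)"
  shows "Qparam P g1 g2 \<in> rel_interior (DeltaP P)"
proof -
  define A where "A = {Qparam P h1 h2 | h1 h2. (g1min P = g1max P \<longrightarrow> h1 = g1min P) \<and> (g2min P = g2max P \<longrightarrow> h2 = g2min P)}"
  have affA: "affine A" unfolding affine_def
  proof (intro ballI allI impI)
    fix x y u w assume x: "x \<in> A" and y: "y \<in> A" and uv: "u + w = (1::real)"
    obtain h1 h2 where hx: "x = Qparam P h1 h2" "g1min P = g1max P \<longrightarrow> h1 = g1min P" "g2min P = g2max P \<longrightarrow> h2 = g2min P"
      using x unfolding A_def by blast
    obtain k1 k2 where hy: "y = Qparam P k1 k2" "g1min P = g1max P \<longrightarrow> k1 = g1min P" "g2min P = g2max P \<longrightarrow> k2 = g2min P"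
      using y unfolding A_def by blast
    have "u *\<^sub>R x + w *\<^sub>R y = Qparam P (u*h1 + w*k1) (u*h2 + w*k2)" using hx hy Qparam_affine[OF uv] by simp
    moreover have "g1min P = g1max P \<longrightarrow> u*h1 + w*k1 = g1min P"
      using hx hy uv by (auto simp: algebra_simps simp flip: distrib_right)
    moreover have "g2min P = g2max P \<longrightarrow> u*h2 + w*k2 = g2min P"
      using hx hy uv by (auto simp: algebra_simps simp flip: distrib_right)
    ultimately show "u *\<^sub>R x + w *\<^sub>R y \<in> A" unfolding A_def by blast
  qed
  have SA: "DeltaP P \<subseteq> A"
  proof
    fix Q assume Q: "Q \<in> DeltaP P"
    note D = Delta_param[OF Q]
    show "Q \<in> A" unfolding A_def using D by (intro CollectI exI conjI) (rule D(1), auto)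
  qed
  have hullA: "affine hull (DeltaP P) \<subseteq> A" using hull_minimal[of "DeltaP P" A affine] SA affA by blast
  define r1 where "r1 = (if g1min P = g1max P then 1 else min (g1 - g1min P) (g1max P - g1))"
  define r2 where "r2 = (if g2min P = g2max P then 1 else min (g2 - g2min P) (g2max P - g2))"
  define r where "r = min (pa P * r1) ((1 - pa P) * r2)"
  have r1p: "r1 > 0" using I1 unfolding r1_def by auto
  have r2p: "r2 > 0" using I2 unfolding r2_def by auto
  have rp: "r > 0" unfolding r_def using r1p r2p a0 pos1 by simp
  have QtD: "Qparam P g1 g2 \<in> DeltaP P" by (rule Qparam_in[OF g])
  have sub: "ball (Qparam P g1 g2) r \<inter> affine hull (DeltaP P) \<subseteq> DeltaP P"
  proof
    fix Q assume "Q \<in> ball (Qparam P g1 g2) r \<inter> affine hull (DeltaP P)"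
    hence b: "dist (Qparam P g1 g2) Q < r" and "Q \<in> A" using hullA by auto
    then obtain h1 h2 where hQ: "Q = Qparam P h1 h2" "g1min P = g1max P \<longrightarrow> h1 = g1min P" "g2min P = g2max P \<longrightarrow> h2 = g2min P"
      unfolding A_def by blast
    have n1: "\<bar>(Qparam P g1 g2 - Q)$(0,0,0)\<bar> < r" using b component_le_norm_cart[of "Qparam P g1 g2 - Q" "(0,0,0)"]
      by (simp add: dist_norm)
    have n2: "\<bar>(Qparam P g1 g2 - Q)$(1,0,0)\<bar> < r" using b component_le_norm_cart[of "Qparam P g1 g2 - Q" "(1,0,0)"]
      by (simp add: dist_norm)
    have e1: "(Qparam P g1 g2 - Q)$(0,0,0) = pa P * (g1 - h1)" unfolding hQ(1) by (simp add: Qp algebra_simps)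
    have "pa P * \<bar>g1 - h1\<bar> < pa P * r1" using n1 a0 unfolding e1 r_def abs_mult by simp
    hence d1: "\<bar>g1 - h1\<bar> < r1" using a0 mult_less_cancel_left_pos by blast
    have e2: "(Qparam P g1 g2 - Q)$(1,0,0) = (1 - pa P) * (g2 - h2)" unfolding hQ(1) by (simp add: Qp algebra_simps)
    have "(1 - pa P) * \<bar>g2 - h2\<bar> < (1 - pa P) * r2" using n2 pos1 unfolding e2 r_def abs_mult by simp
    hence d2: "\<bar>g2 - h2\<bar> < r2" using pos1 mult_less_cancel_left_pos by blast
    have "g1min P \<le> h1 \<and> h1 \<le> g1max P"
    proof (cases "g1min P = g1max P")
      case True thus ?thesis using hQ(2) by simp
    next
      case False thus ?thesis using d1 unfolding r1_def by (simp add: abs_less_iff)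
    qed
    moreover have "g2min P \<le> h2 \<and> h2 \<le> g2max P"
    proof (cases "g2min P = g2max P")
      case True thus ?thesis using hQ(3) by simp
    next
      case False thus ?thesis using d2 unfolding r2_def by (simp add: abs_less_iff)
    qed
    ultimately show "Q \<in> DeltaP P" unfolding hQ(1) by (intro Qparam_in) auto
  qed
  show ?thesis unfolding mem_rel_interior
    by (rule exI[of _ "ball (Qparam P g1 g2) r"]) (use rp QtD sub in auto)
qed
end

lemma pos_comb: fixes A B X Y :: real
  assumes "A > 0" "B > 0" "X \<ge> 0" "Y \<ge> 0" "\<not> (X = 0 \<and> Y = 0)" shows "A*X + B*Y > 0"
proof -
  have "A*X \<ge> 0" "B*Y \<ge> 0" using assms by auto
  moreover have "A*X > 0 \<or> B*Y > 0" using assms by (auto simp: zero_less_mult_iff)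
  ultimately show ?thesis by linarith
qed

lemma zc_pure:
  fixes A X1 X2 Y1 Y2 g gmin gmax :: real
  assumes "A > 0" "gmin = - min X1 X2" "gmax = min Y1 Y2" "gmin \<le> g" "g \<le> gmax"
    "\<not> (gmin = gmax \<or> (gmin < g \<and> g < gmax))"
  shows "(A*(X1+g) = 0 \<and> A*(X1+(gmin+gmax)/2) > 0) \<or> (A*(X2+g) = 0 \<and> A*(X2+(gmin+gmax)/2) > 0) \<or>
    (A*(Y1-g) = 0 \<and> A*(Y1-(gmin+gmax)/2) > 0) \<or> (A*(Y2-g) = 0 \<and> A*(Y2-(gmin+gmax)/2) > 0)"
proof -
  have gg: "gmin < gmax" "g = gmin \<or> g = gmax" using assms(4-6) by auto
  have "(X1+g = 0 \<and> X1+(gmin+gmax)/2 > 0) \<or> (X2+g = 0 \<and> X2+(gmin+gmax)/2 > 0) \<or>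
    (Y1-g = 0 \<and> Y1-(gmin+gmax)/2 > 0) \<or> (Y2-g = 0 \<and> Y2-(gmin+gmax)/2 > 0)"
  proof -
    have m: "gmin < (gmin+gmax)/2" "(gmin+gmax)/2 < gmax" using gg by auto
    from gg(2) show ?thesis
    proof
      assume g: "g = gmin"
      show ?thesis
      proof (cases "X1 \<le> X2")
        case True hence "gmin = -X1" using assms(2) by simp
        thus ?thesis using m g by (intro disjI1 conjI) linarith+
      next
        case False hence "gmin = -X2" using assms(2) by simp
        thus ?thesis using m g by (intro disjI2 disjI1 conjI) linarith+
      qed
    next
      assume g: "g = gmax"
      show ?thesis
      proof (cases "Y1 \<le> Y2")
        case True hence "gmax = Y1" using assms(3) by simp
        thus ?thesis using m g by (intro disjI2 disjI1 conjI) linarith+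
      next
        case False hence "gmax = Y2" using assms(3) by simp
        thus ?thesis using m g by (intro disjI2 conjI) linarith+
      qed
    qed
  qed
  thus ?thesis using assms(1) by (simp add: zero_less_mult_iff)
qed

context PP begin
lemma main_loc:
  assumes Qt: "Qt \<in> DeltaP P" and mx: "\<forall>Q\<in>DeltaP P. condEntT Q \<le> condEntT Qt"
    and fr: "Qt \<in> rel_frontier (DeltaP P)"
  shows "Qt = Qparam P (g1min P) (g2min P) \<or> Qt = Qparam P (g1max P) (g2max P)"
proof (rule ccontr)
  assume nc: "\<not> ?thesis"
  note D = Delta_param[OF Qt]
  obtain g1 g2 where Qeq: "Qt = Qparam P g1 g2" and gb: "g1min P \<le> g1" "g1 \<le> g1max P" "g2min P \<le> g2" "g2 \<le> g2max P"
    using D by blast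
  have nri: "Qt \<notin> rel_interior (DeltaP P)" using fr unfolding rel_frontier_def by auto
  have nI: "\<not> ((g1min P = g1max P \<or> (g1min P < g1 \<and> g1 < g1max P)) \<and> (g2min P = g2max P \<or> (g2min P < g2 \<and> g2 < g2max P)))"
    using relint[OF gb] nri Qeq by blast
  have c1: "\<not> (g1 = g1min P \<and> g2 = g2min P)" using nc Qeq by auto
  have c2: "\<not> (g1 = g1max P \<and> g2 = g2max P)" using nc Qeq by auto
  define m where "m = Qparam P ((g1min P + g1max P)/2) ((g2min P + g2max P)/2)"
  have mD: "m \<in> DeltaP P" unfolding m_def using gb by (intro Qparam_in) auto
  have qn: "\<forall>i. Qt$i \<ge> 0" using Qt unfolding DeltaP_def prob_dist_def by blast
  have mn: "\<forall>i. m$i \<ge> 0" using mD unfolding DeltaP_def prob_dist_def by blast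
  have pp: "\<forall>x y. pXY Qt x y > 0"
  proof -
    have "pXY Qt 0 0 > 0" unfolding margs Qeq Qp
      using gb c1 a0 pos1 by (intro pos_comb) (auto simp: g1min_def g2min_def)
    moreover have "pXY Qt 1 1 > 0" unfolding margs Qeq Qp
      using gb c1 a0 pos1 by (intro pos_comb) (auto simp: g1min_def g2min_def)
    moreover have "pXY Qt 0 1 > 0" unfolding margs Qeq Qp
      using gb c2 a0 pos1 by (intro pos_comb) (auto simp: g1max_def g2max_def)
    moreover have "pXY Qt 1 0 > 0" unfolding margs Qeq Qp
      using gb c2 a0 pos1 by (intro pos_comb) (auto simp: g1max_def g2max_def)
    ultimately show ?thesis by (metis two_cases)
  qed
  have zc: "\<exists>i0. Qt$i0 = 0 \<and> m$i0 > 0"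
  proof (cases "g1min P = g1max P \<or> (g1min P < g1 \<and> g1 < g1max P)")
    case False
    have "(Qt$(0,0,0) = 0 \<and> m$(0,0,0) > 0) \<or> (Qt$(0,1,1) = 0 \<and> m$(0,1,1) > 0) \<or>
       (Qt$(0,0,1) = 0 \<and> m$(0,0,1) > 0) \<or> (Qt$(0,1,0) = 0 \<and> m$(0,1,0) > 0)"
      unfolding Qeq m_def Qp by (rule zc_pure[OF a0 g1min_def g1max_def gb(1,2) False])
    thus ?thesis by blast
  next
    case True
    hence "\<not> (g2min P = g2max P \<or> (g2min P < g2 \<and> g2 < g2max P))" using nI by blast
    hence nI2: "\<not> (g2min P = g2max P \<or> (g2min P < g2 \<and> g2 < g2max P))" by blast
    have "(Qt$(1,0,0) = 0 \<and> m$(1,0,0) > 0) \<or> (Qt$(1,1,1) = 0 \<and> m$(1,1,1) > 0) \<or>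
       (Qt$(1,0,1) = 0 \<and> m$(1,0,1) > 0) \<or> (Qt$(1,1,0) = 0 \<and> m$(1,1,0) > 0)"
      unfolding Qeq m_def Qp by (rule zc_pure[OF pos1 g2min_def g2max_def gb(3,4) nI2])
    thus ?thesis by blast
  qed
  then obtain i0 where "Qt$i0 = 0" "m$i0 > 0" by blast
  from improve[OF qn mn pp this] obtain \<epsilon> where e: "\<epsilon> > 0" "\<epsilon> < 1"
    "condEntT Qt < condEntT ((1-\<epsilon>) *\<^sub>R Qt + \<epsilon> *\<^sub>R m)" by blast
  have "(1-\<epsilon>) *\<^sub>R Qt + \<epsilon> *\<^sub>R m \<in> DeltaP P" using Delta_convex[OF Qt mD] e by simp
  thus False using mx e(3) by fastforce
qed
end

theorem mainTheorem18:
  fixes P Qt :: dist3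
  assumes "prob_dist P"
    and "0 < pa P" and "pa P < 1"
    and "Qt \<in> DeltaP P"
    and "\<forall>Q\<in>DeltaP P. condEntT Q \<le> condEntT Qt"
    and "Qt \<in> rel_frontier (DeltaP P)"
  shows "Qt = Qparam P (g1min P) (g2min P) \<or> Qt = Qparam P (g1max P) (g2max P)"
proof -
  interpret PP P using assms(1-3) by unfold_locales
  show ?thesis using main_loc assms(4-6) by blast
qed
end
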